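(* Let $(\mathfrak{g},[\cdot,\cdot]_{\mathfrak{g}},\phi_{\mathfrak{g}})$ be a Hom-Lie algebra, $(V,\beta,\rho)$ a weakly involutive representation of it ($V$ finite-dimensional), and $T:V\to\mathfrak g$ a linear map satisfying $T\beta=\phi_{\mathfrak g}T$. If $T$ is an $\mathcal O$-operator associated to $(V,\beta,\rho)$, then $r=\overline T-\sigma(\overline T)$ is a solution of the classical Hom-Yang-Baxter equation $[r,r]=0$ in the Hom-Lie algebra $\mathfrak g\ltimes_{\rho^\circ}V^*$.
   Context: A Hom-Lie algebra $(\mathfrak{h},[\cdot,\cdot]_{\mathfrak{h}},\phi_{\mathfrak{h}})$: skew-symmetric bilinear bracket and linear map with $\phi_{\mathfrak h}[x,y]=[\phi_{\mathfrak h}x,\phi_{\mathfrak h}y]$ and $[\phi_{\mathfrak h}(x),[y,z]]+[\phi_{\mathfrak h}(y),[z,x]]+[\phi_{\mathfrak h}(z),[x,y]]=0$. A representation $(V,\beta,\rho)$ of $\mathfrak g$: $\beta\in\mathfrak{gl}(V)$, $\rho:\mathfrak g\to\mathfrak{gl}(V)$ linear with $\rho(\phi_{\mathfrak g}(x))\beta=\beta\rho(x)$ and $\rho([x,y]_{\mathfrak g})\beta=\rho(\phi_{\mathfrak g}(x))\rho(y)-\rho(\phi_{\mathfrak g}(y))\rho(x)$; it is weakly involutive if $\rho(\phi_{\mathfrak g}^2(x))=\rho(x)$ for all $x$. Define $\rho^\circ:\mathfrak g\to\mathfrak{gl}(V^* )$ by $\langle\rho^\circ(x)\xi,v\rangle=-\langle\xi,\rho(\phi_{\mathfrak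 g}(x))v\rangle$; when $\rho$ is weakly involutive, $(V^*,\beta^*,\rho^\circ)$ is a representation. The semidirect product $\mathfrak g\ltimes_{\rho^\circ}V^*$ is $\mathfrak g\oplus V^*$ with bracket $[(x,\xi),(y,\eta)]=([x,y]_{\mathfrak g},\rho^\circ(x)\eta-\rho^\circ(y)\xi)$ and twisting map $\phi_{\mathfrak g}\oplus\beta^*$. An $\mathcal O$-operator associated to $(V,\beta,\rho)$ is a linear map $T:V\to\mathfrak g$ with $T\beta=\phi_{\mathfrak g}T$ and $[T(u),T(v)]_{\mathfrak g}=T(\rho(T(u))v-\rho(T(v))u)$ for all $u,v\in V$. With $\{v_i\}$ a basis of $V$ and $\{v^i\}$ the dual basis, $\overline T=\sum_iv^i\otimes T(v_i)\in(\mathfrak g\oplus V^* )^{\otimes2}$, and $\sigma$ is the flip of tensor factors. For a Hom-Lie algebra $(\mathfrak h,[\cdot,\cdot],\phi)$ and $r=\sum_ix_i\otimes y_i\in\mathfrak h\otimes\mathfrak h$, $[r,r]=\sum_{i,j}\big([x_i,x_j]\otimes\phi(y_i)\otimes\phi(y_j)+\phi(x_i)\otimes[y_i,x_j]\otimes\phi(y_j)+\phi(x_i)\otimes\phi(x_j)\otimes[y_i,y_j]\big)$; the classical Hom-Yang-Baxter equation is $[r,r]=0$. *)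

theory Defs
  imports Main "HOL.Vector_Spaces" "HOL-Library.Function_Algebras" "HOL-Library.Product_Plus"
begin

text \<open>The finite-dimensional representation
 space V is realised in coordinates as 'n \<Rightarrow> 'k ('n a finite index type); its
 standard basis e_i is the basis v_i, and V* is realised as 'n \<Rightarrow> 'k via the
 pairing \<langle>xi, v\<rangle> = sum_i xi i * v i, so the dual basis v^i is again e_i.\<close>

definition klinear :: "('k \<Rightarrow> 'a \<Rightarrow> 'a) \<Rightarrow> ('k \<Rightarrow> 'b \<Rightarrow> 'b) \<Rightarrow> ('a::ab_group_add \<Rightarrow> 'b::ab_group_add) \<Rightarrow> bool" where
  "klinear s1 s2 f \<longleftrightarrow> (\<forall>x y. f (x + y) = f x + f y) \<and> (\<forall>c x. f (s1 c x) = s2 c (f x))"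

definition vscale :: "'k::field \<Rightarrow> ('n \<Rightarrow> 'k) \<Rightarrow> ('n \<Rightarrow> 'k)" where
  "vscale c v = (\<lambda>i. c * v i)"

definition ebas :: "'n \<Rightarrow> ('n \<Rightarrow> 'k::field)" where
  "ebas i = (\<lambda>j. if j = i then 1 else 0)"

definition pairing :: "('n::finite \<Rightarrow> 'k::field) \<Rightarrow> ('n \<Rightarrow> 'k) \<Rightarrow> 'k" where
  "pairing xi v = (\<Sum>i\<in>UNIV. xi i * v i)"

definition hom_lie_algebra ::
  "('k::field \<Rightarrow> 'g \<Rightarrow> 'g) \<Rightarrow> ('g::ab_group_add \<Rightarrow> 'g \<Rightarrow> 'g) \<Rightarrow> ('g \<Rightarrow> 'g) \<Rightarrow> bool" where
  "hom_lie_algebra sc br phi \<longleftrightarrow>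
     vector_space sc \<and>
     (\<forall>y. klinear sc sc (\<lambda>x. br x y)) \<and> (\<forall>x. klinear sc sc (\<lambda>y. br x y)) \<and>
     (\<forall>x y. br x y = - br y x) \<and>
     klinear sc sc phi \<and>
     (\<forall>x y. phi (br x y) = br (phi x) (phi y)) \<and>
     (\<forall>x y z. br (phi x) (br y z) + br (phi y) (br z x) + br (phi z) (br x y) = 0)"

definition hom_rep ::
  "('k::field \<Rightarrow> 'g \<Rightarrow> 'g) \<Rightarrow> ('g::ab_group_add \<Rightarrow> 'g \<Rightarrow> 'g) \<Rightarrow> ('g \<Rightarrow> 'g)
   \<Rightarrow> (('n \<Rightarrow> 'k) \<Rightarrow> ('n \<Rightarrow> 'k)) \<Rightarrow> ('g \<Rightarrow> ('n \<Rightarrow> 'k) \<Rightarrow> ('n \<Rightarrow> 'k)) \<Rightarrow> bool" where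
  "hom_rep sc br phi beta rho \<longleftrightarrow>
     klinear vscale vscale beta \<and>
     (\<forall>x. klinear vscale vscale (rho x)) \<and>
     (\<forall>x y v. rho (x + y) v = rho x v + rho y v) \<and>
     (\<forall>c x v. rho (sc c x) v = vscale c (rho x v)) \<and>
     (\<forall>x. rho (phi x) \<circ> beta = beta \<circ> rho x) \<and>
     (\<forall>x y. rho (br x y) \<circ> beta = (\<lambda>v. rho (phi x) (rho y v) - rho (phi y) (rho x v)))"

definition weakly_involutive :: "('g \<Rightarrow> 'g) \<Rightarrow> ('g \<Rightarrow> 'v \<Rightarrow> 'v) \<Rightarrow> bool" where
  "weakly_involutive phi rho \<longleftrightarrow> (\<forall>x. rho (phi (phi x)) = rho x)"

text \<open>Dual representation rho-circ and dual map beta*, on V* = 'n \<Rightarrow> 'k, defined by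
  \<langle>rho_circ x xi, v\<rangle> = - \<langle>xi, rho (phi x) v\<rangle> and \<langle>beta* xi, v\<rangle> = \<langle>xi, beta v\<rangle>
  (evaluated on the basis vectors v = e_j).\<close>
definition rho_circ :: "('g \<Rightarrow> 'g) \<Rightarrow> ('g \<Rightarrow> ('n::finite \<Rightarrow> 'k::field) \<Rightarrow> ('n \<Rightarrow> 'k))
    \<Rightarrow> 'g \<Rightarrow> ('n \<Rightarrow> 'k) \<Rightarrow> ('n \<Rightarrow> 'k)" where
  "rho_circ phi rho x xi = (\<lambda>j. - pairing xi (rho (phi x) (ebas j)))"

definition dual_map :: "(('n::finite \<Rightarrow> 'k::field) \<Rightarrow> ('n \<Rightarrow> 'k)) \<Rightarrow> ('n \<Rightarrow> 'k) \<Rightarrow> ('n \<Rightarrow> 'k)" where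
  "dual_map beta xi = (\<lambda>j. pairing xi (beta (ebas j)))"

definition sd_scale :: "('k::field \<Rightarrow> 'g \<Rightarrow> 'g) \<Rightarrow> 'k \<Rightarrow> 'g \<times> ('n \<Rightarrow> 'k) \<Rightarrow> 'g \<times> ('n \<Rightarrow> 'k)" where
  "sd_scale sc c p = (sc c (fst p), vscale c (snd p))"

definition sd_bracket :: "('g \<Rightarrow> 'g \<Rightarrow> 'g) \<Rightarrow> ('g \<Rightarrow> 'g) \<Rightarrow> ('g \<Rightarrow> ('n::finite \<Rightarrow> 'k::field) \<Rightarrow> ('n \<Rightarrow> 'k))
   \<Rightarrow> 'g \<times> ('n \<Rightarrow> 'k) \<Rightarrow> 'g \<times> ('n \<Rightarrow> 'k) \<Rightarrow> 'g \<times> ('n \<Rightarrow> 'k)" where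
  "sd_bracket br phi rho p q =
     (br (fst p) (fst q), rho_circ phi rho (fst p) (snd q) - rho_circ phi rho (fst q) (snd p))"

definition sd_twist :: "('g \<Rightarrow> 'g) \<Rightarrow> (('n::finite \<Rightarrow> 'k::field) \<Rightarrow> ('n \<Rightarrow> 'k))
   \<Rightarrow> 'g \<times> ('n \<Rightarrow> 'k) \<Rightarrow> 'g \<times> ('n \<Rightarrow> 'k)" where
  "sd_twist phi beta p = (phi (fst p), dual_map beta (snd p))"

definition O_operator :: "('g::ab_group_add \<Rightarrow> 'g \<Rightarrow> 'g) \<Rightarrow> ('g \<Rightarrow> 'g)
   \<Rightarrow> (('n \<Rightarrow> 'k) \<Rightarrow> ('n \<Rightarrow> 'k::field)) \<Rightarrow> ('g \<Rightarrow> ('n \<Rightarrow> 'k) \<Rightarrow> ('n \<Rightarrow> 'k))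
   \<Rightarrow> (('n \<Rightarrow> 'k) \<Rightarrow> 'g) \<Rightarrow> bool" where
  "O_operator br phi beta rho T \<longleftrightarrow>
     T \<circ> beta = phi \<circ> T \<and>
     (\<forall>u v. br (T u) (T v) = T (rho (T u) v - rho (T v) u))"

text \<open>Elements of h\<otimes>h\<otimes>h (h a 'k-vector space with scalar multiplication sc) are
  represented through the canonical injective map h\<otimes>h\<otimes>h \<rightarrow> (h*\<otimes>h*\<otimes>h*)*:
  a finite sum \<Sum>_t a_t \<otimes> b_t \<otimes> c_t is zero iff for all linear functionals f1 f2 f3
  on h, \<Sum>_t f1 a_t * f2 b_t * f3 c_t = 0.\<close>
definition tensor3_zero :: "('k::field \<Rightarrow> 'h \<Rightarrow> 'h) \<Rightarrow> 'i set \<Rightarrow> ('i \<Rightarrow> 'h::ab_group_add)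
    \<Rightarrow> ('i \<Rightarrow> 'h) \<Rightarrow> ('i \<Rightarrow> 'h) \<Rightarrow> bool" where
  "tensor3_zero sc I a b c \<longleftrightarrow>
     (\<forall>f1 f2 f3. klinear sc (*) f1 \<longrightarrow> klinear sc (*) f2 \<longrightarrow> klinear sc (*) f3 \<longrightarrow>
        (\<Sum>t\<in>I. f1 (a t) * f2 (b t) * f3 (c t)) = 0)"

text \<open>[r,r] for r = \<Sum>_{i\<in>I} x_i \<otimes> y_i in the Hom-Lie algebra (h, br, phi), as an
  element of h\<otimes>h\<otimes>h: the sum over (i,j,k) with k\<in>{0,1,2} selecting the three terms.\<close>
definition CHYBE :: "('k::field \<Rightarrow> 'h \<Rightarrow> 'h) \<Rightarrow> ('h::ab_group_add \<Rightarrow> 'h \<Rightarrow> 'h) \<Rightarrow> ('h \<Rightarrow> 'h)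
    \<Rightarrow> 'i set \<Rightarrow> ('i \<Rightarrow> 'h) \<Rightarrow> ('i \<Rightarrow> 'h) \<Rightarrow> bool" where
  "CHYBE sc br phi I x y \<longleftrightarrow>
     tensor3_zero sc (I \<times> I \<times> {0::nat, 1, 2})
       (\<lambda>(i, j, k). if k = 0 then br (x i) (x j) else phi (x i))
       (\<lambda>(i, j, k). if k = 0 then phi (y i) else if k = 1 then br (y i) (x j) else phi (x j))
       (\<lambda>(i, j, k). if k = 2 then br (y i) (y j) else phi (y j))"

text \<open>r = Tbar - \<sigma>(Tbar) = \<Sum>_i v^i \<otimes> T(v_i) - \<Sum>_i T(v_i) \<otimes> v^i, indexed by 'n \<times> bool
  (True: the term v^i \<otimes> T v_i; False: the term (- T v_i) \<otimes> v^i).\<close>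
definition r_left :: "(('n \<Rightarrow> 'k::field) \<Rightarrow> 'g::ab_group_add) \<Rightarrow> 'n \<times> bool \<Rightarrow> 'g \<times> ('n \<Rightarrow> 'k)" where
  "r_left T p = (if snd p then (0, ebas (fst p)) else (- T (ebas (fst p)), 0))"

definition r_right :: "(('n \<Rightarrow> 'k::field) \<Rightarrow> 'g::ab_group_add) \<Rightarrow> 'n \<times> bool \<Rightarrow> 'g \<times> ('n \<Rightarrow> 'k)" where
  "r_right T p = (if snd p then (T (ebas (fst p)), 0) else (0, ebas (fst p)))"

end

theory Submission
  imports Defs
begin

lemma kl_add: "klinear s1 s2 f \<Longrightarrow> f (x + y) = f x + f y"
  by (simp add: klinear_def)
lemma kl_sc: "klinear s1 s2 f \<Longrightarrow> f (s1 c x) = s2 c (f x)"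
  by (simp add: klinear_def)
lemma kl_zero: "klinear s1 s2 f \<Longrightarrow> f 0 = 0"
  by (metis add_cancel_right_right add_0 kl_add)
lemma kl_neg: "klinear s1 s2 f \<Longrightarrow> f (- x) = - f x"
  by (metis add.right_inverse kl_add kl_zero neg_eq_iff_add_eq_0)
lemma kl_diff: "klinear s1 s2 f \<Longrightarrow> f (x - y) = f x - f y"
  by (metis diff_conv_add_uminus kl_add kl_neg)
lemma kl_sum: "klinear s1 s2 f \<Longrightarrow> f (\<Sum>i\<in>A. g i) = (\<Sum>i\<in>A. f (g i))"
  by (induction A rule: infinite_finite_induct) (auto simp: kl_zero kl_add)
lemma kl_comp: "klinear s1 s2 f \<Longrightarrow> klinear s2 s3 g \<Longrightarrow> klinear s1 s3 (g \<circ> f)"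
  by (simp add: klinear_def)

lemma if01_mult[simp]: "((if P then 1 else 0) * (a::'a::field)) = (if P then a else 0)"
  "(a * (if P then 1 else 0)) = (if P then a else 0)"
  by auto

lemma fun_sum_apply: "(\<Sum>i\<in>A. g i) j = (\<Sum>i\<in>A. g i j)"
  by (induction A rule: infinite_finite_induct) auto

lemma vec_decomp: "(x :: 'n::finite \<Rightarrow> 'k::field) = (\<Sum>i\<in>UNIV. vscale (x i) (ebas i))"
proof
  fix j
  have "(\<Sum>i\<in>UNIV. vscale (x i) (ebas i)) j = (\<Sum>i\<in>UNIV. (if i = j then x i else 0))"
    by (simp add: fun_sum_apply vscale_def ebas_def)
  also have "\<dots> = x j" by simp
  finally show "x j = (\<Sum>i\<in>UNIV. vscale (x i) (ebas i)) j" by simp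
qed

lemma klin_coord:
  fixes h :: "('n::finite \<Rightarrow> 'k::field) \<Rightarrow> 'k"
  assumes "klinear vscale (*) h"
  shows "h x = (\<Sum>i\<in>UNIV. x i * h (ebas i))"
proof -
  have "h x = h (\<Sum>i\<in>UNIV. vscale (x i) (ebas i))" using vec_decomp[of x] by simp
  also have "\<dots> = (\<Sum>i\<in>UNIV. x i * h (ebas i))"
    using assms by (simp add: kl_sum kl_sc)
  finally show ?thesis .
qed

lemma kl_proj: "klinear s vscale h \<Longrightarrow> klinear s (*) (\<lambda>v. h v j)"
  by (simp add: klinear_def vscale_def)

lemma pairing_ebas: "pairing (ebas i) v = v i"
  by (simp add: pairing_def ebas_def)
lemma pairing_zero[simp]: "pairing 0 v = 0"
  by (simp add: pairing_def)
lemma pairing_neg[simp]: "pairing (- xi) v = - pairing xi v"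
  by (simp add: pairing_def sum_negf)
lemma pairing_add[simp]: "pairing (xi + eta) v = pairing xi v + pairing eta v"
  by (simp add: pairing_def sum.distrib distrib_right)
lemma pairing_diff[simp]: "pairing (xi - eta) v = pairing xi v - pairing eta v"
  by (simp add: pairing_def sum_subtractf left_diff_distrib)


locale S =
  fixes sc :: "'k::field \<Rightarrow> 'g::ab_group_add \<Rightarrow> 'g"
    and br :: "'g \<Rightarrow> 'g \<Rightarrow> 'g" and phi :: "'g \<Rightarrow> 'g"
    and beta :: "('n::finite \<Rightarrow> 'k) \<Rightarrow> ('n \<Rightarrow> 'k)"
    and rho :: "'g \<Rightarrow> ('n \<Rightarrow> 'k) \<Rightarrow> ('n \<Rightarrow> 'k)"
    and T :: "('n \<Rightarrow> 'k) \<Rightarrow> 'g"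
  assumes H: "hom_lie_algebra sc br phi"
    and R: "hom_rep sc br phi beta rho"
    and W: "weakly_involutive phi rho"
    and TL: "klinear vscale sc T"
    and Tb: "T \<circ> beta = phi \<circ> T"
    and O: "O_operator br phi beta rho T"
begin

lemma VS: "vector_space sc" using H unfolding hom_lie_algebra_def by blast
lemma sc0: "sc c 0 = 0"
proof -
  interpret vector_space sc by (rule VS)
  show ?thesis by simp
qed
lemma brL: "klinear sc sc (\<lambda>x. br x y)" using H unfolding hom_lie_algebra_def by blast
lemma brR: "klinear sc sc (\<lambda>y. br x y)" using H unfolding hom_lie_algebra_def by blast
lemma phiL: "klinear sc sc phi" using H unfolding hom_lie_algebra_def by blast
lemma phibr: "phi (br x y) = br (phi x) (phi y)" using H unfolding hom_lie_algebra_def by blast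
lemma betaL: "klinear vscale vscale beta" using R unfolding hom_rep_def by blast
lemma rhoL: "klinear vscale vscale (rho x)" using R unfolding hom_rep_def by blast
lemma rho_add: "rho (x + y) v = rho x v + rho y v" using R unfolding hom_rep_def by blast
lemma rho_sc: "rho (sc c x) v = vscale c (rho x v)" using R unfolding hom_rep_def by blast
lemma Tbeta: "T (beta v) = phi (T v)" using Tb by (metis comp_apply)
lemma Oop: "br (T u) (T v) = T (rho (T u) v - rho (T v) u)" using O by (simp add: O_operator_def)
lemma winv: "rho (phi (phi x)) = rho x" using W by (simp add: weakly_involutive_def)

lemma rhoLx: "klinear sc (*) (\<lambda>x. rho x v i)"
  by (simp add: klinear_def rho_add rho_sc vscale_def)

lemma br0[simp]: "br 0 y = 0" "br x 0 = 0" using kl_zero[OF brL] kl_zero[OF brR] by auto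
lemma brneg[simp]: "br (- x) y = - br x y" "br x (- y) = - br x y"
  using kl_neg[OF brL] kl_neg[OF brR] by auto
lemma phi0[simp]: "phi 0 = 0" using kl_zero[OF phiL] .
lemma phineg[simp]: "phi (- x) = - phi x" using kl_neg[OF phiL] .
lemma T0[simp]: "T 0 = 0" using kl_zero[OF TL] .
lemma rho0[simp]: "rho 0 v = 0" by (metis add_cancel_right_right add_0 rho_add)
lemma rhoneg[simp]: "rho (- x) v = - rho x v"
  by (metis add.right_inverse rho_add rho0 neg_eq_iff_add_eq_0)

lemma rc_zero1[simp]: "rho_circ phi rho x 0 = 0"
  by (simp add: rho_circ_def zero_fun_def pairing_def)
lemma rc_zero2[simp]: "rho_circ phi rho 0 xi = 0"
  by (simp add: rho_circ_def zero_fun_def pairing_def)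
lemma rc_neg[simp]: "rho_circ phi rho (- x) xi = - rho_circ phi rho x xi"
  by (simp add: rho_circ_def fun_eq_iff pairing_def sum_negf)
lemma dm_zero[simp]: "dual_map beta 0 = 0"
  by (simp add: dual_map_def zero_fun_def pairing_def)

lemma pair_rc: "pairing (rho_circ phi rho x (ebas i)) c = - rho (phi x) c i"
proof -
  have "rho (phi x) c i = (\<Sum>l\<in>UNIV. c l * rho (phi x) (ebas l) i)"
    using klin_coord[OF kl_proj[OF rhoL]] .
  then show ?thesis
    unfolding rho_circ_def pairing_ebas by (simp add: pairing_def sum_negf mult.commute)
qed

lemma pair_dm: "pairing (dual_map beta (ebas i)) c = beta c i"
proof -
  have "beta c i = (\<Sum>l\<in>UNIV. c l * beta (ebas l) i)"
    using klin_coord[OF kl_proj[OF betaL]] .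
  then show ?thesis
    unfolding dual_map_def pairing_ebas by (simp add: pairing_def mult.commute)
qed

lemma fsplit:
  assumes f: "klinear (sd_scale sc) (*) f"
  shows "f (x, xi) = f (x, 0) + pairing xi (\<lambda>j. f (0, ebas j))"
proof -
  have k: "klinear vscale (*) (\<lambda>xi. f (0, xi))"
    unfolding klinear_def
  proof (intro conjI allI)
    fix a b show "f (0, a + b) = f (0, a) + f (0, b)" using kl_add[OF f, of "(0,a)" "(0,b)"] by simp
  next
    fix c a show "f (0, vscale c a) = c * f (0, a)" using kl_sc[OF f, of c "(0,a)"] by (simp add: sd_scale_def sc0)
  qed
  have "f (x, xi) = f ((x,0) + (0, xi))" by simp
  also have "\<dots> = f (x,0) + f (0, xi)" using kl_add[OF f] .
  also have "f (0, xi) = pairing xi (\<lambda>j. f (0, ebas j))"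
    using klin_coord[OF k, of xi] by (simp add: pairing_def)
  finally show ?thesis .
qed

lemma Fklin:
  assumes f: "klinear (sd_scale sc) (*) f"
  shows "klinear sc (*) (\<lambda>x. f (x, 0))"
    unfolding klinear_def
  proof (intro conjI allI)
    fix a b show "f (a + b, 0) = f (a, 0) + f (b, 0)" using kl_add[OF f, of "(a,0)" "(b,0)"] by simp
  next
    fix c a show "f (sc c a, 0) = c * f (a, 0)" using kl_sc[OF f, of c "(a,0)"]
      by (simp add: sd_scale_def vscale_def zero_fun_def)
  qed


end

lemma sum3: "(\<Sum>t\<in>UNIV\<times>UNIV\<times>{0::nat,1,2}. G t) = (\<Sum>p\<in>UNIV. \<Sum>q\<in>UNIV. G (p,q,0) + G (p,q,1) + G (p,q,2))"
proof -
  have "(\<Sum>t\<in>UNIV\<times>UNIV\<times>K. G t) = (\<Sum>p\<in>UNIV. \<Sum>q\<in>UNIV. \<Sum>k\<in>K. G (p,q,k))" for K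
    by (simp add: sum.cartesian_product')
  from this[of "{0::nat,1,2}"] show ?thesis by (simp add: add.assoc)
qed

lemma sum_nb: "(\<Sum>p\<in>(UNIV::('a::finite\<times>bool) set). h p) = (\<Sum>i\<in>UNIV. h (i,True) + h (i,False))"
proof -
  have "(\<Sum>p\<in>(UNIV::('a\<times>bool) set). h p) = (\<Sum>p\<in>UNIV\<times>UNIV. h p)" by simp
  also have "\<dots> = (\<Sum>i\<in>UNIV. \<Sum>b\<in>UNIV. h (i,b))" by (simp add: sum.cartesian_product)
  also have "\<dots> = (\<Sum>i\<in>UNIV. h (i,True) + h (i,False))" by (simp add: UNIV_bool add.commute)
  finally show ?thesis .
qed

context S begin

lemma coll:
  fixes h :: "('n \<Rightarrow> 'k) \<Rightarrow> 'k"
  assumes "klinear vscale (*) h" "\<And>j. g j = x j * h (ebas j)"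
  shows "sum g UNIV = h x"
  using klin_coord[OF assms(1), of x] assms(2) by simp

lemma KM: "klinear s (*) h \<Longrightarrow> klinear s (*) (\<lambda>v. (a::'k) * h v)"
  by (simp add: klinear_def distrib_left mult.left_commute)

lemma KP: "klinear vscale (*) (\<lambda>v::'n \<Rightarrow> 'k. v j)"
  by (simp add: klinear_def vscale_def)

lemma KG: "klinear sc (*) F \<Longrightarrow> klinear vscale (*) (\<lambda>v. F (phi (T v)))"
  using kl_comp[OF kl_comp[OF TL phiL]] by (simp add: comp_def)

lemma KB1: "klinear sc (*) F \<Longrightarrow> klinear vscale (*) (\<lambda>v. F (br (T v) y))"
  using kl_comp[OF kl_comp[OF TL brL]] by (simp add: comp_def)

lemma KB2: "klinear sc (*) F \<Longrightarrow> klinear vscale (*) (\<lambda>v. F (br x (T v)))"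
  using kl_comp[OF kl_comp[OF TL brR]] by (simp add: comp_def)

lemma KRv: "klinear vscale vscale (\<lambda>v. rho (phi (T v)) c)"
  unfolding klinear_def
proof (intro conjI allI)
  fix x y show "rho (phi (T (x + y))) c = rho (phi (T x)) c + rho (phi (T y)) c"
    by (simp add: kl_add[OF TL] kl_add[OF phiL] rho_add)
next
  fix a x show "rho (phi (T (vscale a x))) c = vscale a (rho (phi (T x)) c)"
    by (simp add: kl_sc[OF TL] kl_sc[OF phiL] rho_sc)
qed

lemma KR: "klinear vscale (*) G \<Longrightarrow> klinear vscale (*) (\<lambda>v. G (rho (phi (T v)) c))"
  using kl_comp[OF KRv] by (simp add: comp_def)

lemma collBB:
  assumes F: "klinear sc (*) F"
  shows "(\<Sum>i\<in>UNIV. \<Sum>j\<in>UNIV. a i * b j * F (br (T (ebas i)) (T (ebas j)))) = F (br (T a) (T b))"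
proof -
  have inner: "(\<Sum>j\<in>UNIV. a i * b j * F (br (T (ebas i)) (T (ebas j)))) = a i * F (br (T (ebas i)) (T b))" for i
    by (rule coll[OF KM[OF KB2[OF F]]]) (simp add: mult_ac)
  have outer: "(\<Sum>i\<in>UNIV. a i * F (br (T (ebas i)) (T b))) = F (br (T a) (T b))"
    by (rule coll[OF KB1[OF F]]) simp
  show ?thesis using inner outer by simp
qed

lemma collRG:
  assumes F: "klinear sc (*) F"
  shows "(\<Sum>i\<in>UNIV. \<Sum>j\<in>UNIV. a i * rho (phi (T (ebas i))) c j * F (phi (T (ebas j)))) = F (phi (T (rho (phi (T a)) c)))"
proof -
  have inner: "(\<Sum>j\<in>UNIV. a i * rho (phi (T (ebas i))) c j * F (phi (T (ebas j)))) = a i * F (phi (T (rho (phi (T (ebas i))) c)))" for i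
    by (rule coll[OF KM[OF KG[OF F]]]) (simp add: mult_ac)
  have outer: "(\<Sum>i\<in>UNIV. a i * F (phi (T (rho (phi (T (ebas i))) c)))) = F (phi (T (rho (phi (T a)) c)))"
    by (rule coll[OF KR[OF KG[OF F]]]) simp
  show ?thesis using inner outer by simp
qed

lemma collP:
  assumes F: "klinear sc (*) F"
  shows "(\<Sum>i\<in>UNIV. \<Sum>j\<in>UNIV. F (phi (T (ebas i))) * rho (phi (T (ebas j))) c i * a j) = F (phi (T (rho (phi (T a)) c)))"
proof -
  have inner: "(\<Sum>j\<in>UNIV. F (phi (T (ebas i))) * rho (phi (T (ebas j))) c i * a j) = F (phi (T (ebas i))) * rho (phi (T a)) c i" for i
    by (rule coll[OF KM[OF KR[OF KP]]]) (simp add: mult_ac)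
  have outer: "(\<Sum>i\<in>UNIV. F (phi (T (ebas i))) * rho (phi (T a)) c i) = F (phi (T (rho (phi (T a)) c)))"
    by (rule coll[OF KG[OF F]]) (simp add: mult_ac)
  show ?thesis using inner outer by simp
qed

lemma main:
  assumes f1: "klinear (sd_scale sc) (*) f1" and f2: "klinear (sd_scale sc) (*) f2"
    and f3: "klinear (sd_scale sc) (*) f3"
  shows "(\<Sum>t\<in>UNIV\<times>UNIV\<times>{0::nat,1,2}.
      f1 ((\<lambda>(i, j, k). if k = 0 then sd_bracket br phi rho (r_left T i) (r_left T j) else sd_twist phi beta (r_left T i)) t) *
      f2 ((\<lambda>(i, j, k). if k = 0 then sd_twist phi beta (r_right T i) else if k = 1 then sd_bracket br phi rho (r_right T i) (r_left T j) else sd_twist phi beta (r_left T j)) t) *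
      f3 ((\<lambda>(i, j, k). if k = 2 then sd_bracket br phi rho (r_right T i) (r_right T j) else sd_twist phi beta (r_right T j)) t)) = 0"
proof -
  define F1 where "F1 = (\<lambda>x. f1 (x, 0))"
  define F2 where "F2 = (\<lambda>x. f2 (x, 0))"
  define F3 where "F3 = (\<lambda>x. f3 (x, 0))"
  define c1 where "c1 = (\<lambda>j. f1 (0, ebas j))"
  define c2 where "c2 = (\<lambda>j. f2 (0, ebas j))"
  define c3 where "c3 = (\<lambda>j. f3 (0, ebas j))"
  have e1: "\<And>x xi. f1 (x, xi) = F1 x + pairing xi c1" unfolding F1_def c1_def by (rule fsplit[OF f1])
  have e2: "\<And>x xi. f2 (x, xi) = F2 x + pairing xi c2" unfolding F2_def c2_def by (rule fsplit[OF f2])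
  have e3: "\<And>x xi. f3 (x, xi) = F3 x + pairing xi c3" unfolding F3_def c3_def by (rule fsplit[OF f3])
  have L1: "klinear sc (*) F1" unfolding F1_def by (rule Fklin[OF f1])
  have L2: "klinear sc (*) F2" unfolding F2_def by (rule Fklin[OF f2])
  have L3: "klinear sc (*) F3" unfolding F3_def by (rule Fklin[OF f3])
  note Ls = kl_zero[OF L1] kl_zero[OF L2] kl_zero[OF L3] kl_neg[OF L1] kl_neg[OF L2] kl_neg[OF L3]
  have S1: "(\<Sum>i\<in>UNIV. \<Sum>j\<in>UNIV. beta c1 i * beta c2 j * F3 (br (T (ebas i)) (T (ebas j)))) = F3 (br (T (beta c1)) (T (beta c2)))"
    by (rule collBB[OF L3])
  have S2: "(\<Sum>i\<in>UNIV. \<Sum>j\<in>UNIV. beta c1 i * rho (phi (T (ebas i))) c2 j * F3 (phi (T (ebas j)))) = F3 (phi (T (rho (phi (T (beta c1))) c2)))"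
    by (rule collRG[OF L3])
  have S3: "(\<Sum>i\<in>UNIV. \<Sum>j\<in>UNIV. rho (phi (T (ebas j))) c1 i * F2 (phi (T (ebas i))) * beta c3 j) = F2 (phi (T (rho (phi (T (beta c3))) c1)))"
    using collP[OF L2, of c1 "beta c3"] by (simp add: mult_ac)
  have S4: "(\<Sum>i\<in>UNIV. \<Sum>j\<in>UNIV. beta c1 i * F2 (br (T (ebas i)) (T (ebas j))) * beta c3 j) = F2 (br (T (beta c1)) (T (beta c3)))"
    using collBB[OF L2, of "beta c1" "beta c3"] by (simp add: mult_ac)
  have S5: "(\<Sum>i\<in>UNIV. \<Sum>j\<in>UNIV. beta c1 i * F2 (phi (T (ebas j))) * rho (phi (T (ebas i))) c3 j) = F2 (phi (T (rho (phi (T (beta c1))) c3)))"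
    using collRG[OF L2, of "beta c1" c3] by (simp add: mult_ac)
  have S6: "(\<Sum>i\<in>UNIV. \<Sum>j\<in>UNIV. rho (phi (T (ebas i))) c1 j * beta c2 i * F3 (phi (T (ebas j)))) = F3 (phi (T (rho (phi (T (beta c2))) c1)))"
    using collRG[OF L3, of "beta c2" c1] by (simp add: mult_ac)
  have S7: "(\<Sum>i\<in>UNIV. \<Sum>j\<in>UNIV. F1 (phi (T (ebas i))) * beta c2 j * rho (phi (T (ebas j))) c3 i) = F1 (phi (T (rho (phi (T (beta c2))) c3)))"
    using collP[OF L1, of c3 "beta c2"] by (simp add: mult_ac)
  have S8: "(\<Sum>i\<in>UNIV. \<Sum>j\<in>UNIV. F1 (br (T (ebas i)) (T (ebas j))) * beta c2 i * beta c3 j) = F1 (br (T (beta c2)) (T (beta c3)))"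
    using collBB[OF L1, of "beta c2" "beta c3"] by (simp add: mult_ac)
  have S9: "(\<Sum>i\<in>UNIV. \<Sum>j\<in>UNIV. F1 (phi (T (ebas i))) * rho (phi (T (ebas j))) c2 i * beta c3 j) = F1 (phi (T (rho (phi (T (beta c3))) c2)))"
    by (rule collP[OF L1])
  show ?thesis
    unfolding sum3 sum_nb
    apply (simp only: prod.case if_True if_False r_left_def r_right_def fst_conv snd_conv sd_bracket_def sd_twist_def)
    apply (simp add: e1 e2 e3 Ls pair_rc pair_dm)
    apply (simp only: sum.distrib sum_subtractf sum_negf)
    apply (simp only: S1 S2 S3 S4 S5 S6 S7 S8 S9)
    apply (simp add: Tbeta winv phibr[symmetric] Oop kl_diff[OF TL] kl_diff[OF phiL] kl_diff[OF L1] kl_diff[OF L2] kl_diff[OF L3])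
    done
qed

end

theorem theorem5p8:
  fixes sc :: "'k::field \<Rightarrow> 'g::ab_group_add \<Rightarrow> 'g"
    and br :: "'g \<Rightarrow> 'g \<Rightarrow> 'g" and phi :: "'g \<Rightarrow> 'g"
    and beta :: "('n::finite \<Rightarrow> 'k) \<Rightarrow> ('n \<Rightarrow> 'k)"
    and rho :: "'g \<Rightarrow> ('n \<Rightarrow> 'k) \<Rightarrow> ('n \<Rightarrow> 'k)"
    and T :: "('n \<Rightarrow> 'k) \<Rightarrow> 'g"
  assumes "hom_lie_algebra sc br phi"
    and "hom_rep sc br phi beta rho"
    and "weakly_involutive phi rho"
    and "klinear vscale sc T"
    and "T \<circ> beta = phi \<circ> T"
    and "O_operator br phi beta rho T"
  shows "CHYBE (sd_scale sc) (sd_bracket br phi rho) (sd_twist phi beta)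
           UNIV (r_left T) (r_right T)"
proof -
  interpret S sc br phi beta rho T using assms by (unfold_locales) auto
  show ?thesis unfolding CHYBE_def tensor3_zero_def
    using main by blast
qed

end
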